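(* Let $\ell\ge1$, $m\ge0$, positive integers $n_0,\dots,n_m$ with $n:=\sum_j n_j-1$, distinct points $z_0=0,z_1,\dots,z_m$ in the open unit disc, and $\ell\times\ell$ matrices $W_{jk}$ be given, with $W$, $Z$, $e$, $S$ as below. Suppose $W$ satisfies the generalized Pick condition $W(S\otimes I_\ell)+(S\otimes I_\ell)W^*>0$. Let $T=(W-\tfrac12I)(W+\tfrac12I)^{-1}$ and, for $\lambda\in[0,1]$, $W(\lambda)=(I-\lambda T)^{-1}-\tfrac12 I$. Then for all $\lambda\in[0,1]$, $$W(\lambda)(S\otimes I_\ell)+(S\otimes I_\ell)W(\lambda)^*>0.$$
   Context: $W_j$ is the $\ell n_j\times\ell n_j$ block lower-triangular block-Toeplitz matrix with $W_{j0}$ on the block diagonal and $W_{jk}$ on the $k$-th block subdiagonal ($k=1,\dots,n_j-1$); $W=\operatorname{diag}(W_0,\dots,W_m)$. $Z_j$ is the $n_j\times n_j$ lower bidiagonal matrix with $z_j$ on the diagonal and $1$ on the subdiagonal; $Z=\operatorname{diag}(Z_0,\dots,Z_m)$. $e\in\mathbb{R}^{n+1}$ stacks the vectors $(1,0,\dots,0)'\in\mathbb{R}^{n_j}$, $j=0,\dots,m$. $S$ is the unique solution of the Lyapunov equation $S=ZSZ^*+ee'$. $\otimes$ is the Kronecker product, $^*$ conjugate transpose, and $>0$ means positive definite. *)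

theory Defs
  imports "Jordan_Normal_Form.Schur_Decomposition"
begin

text \<open>Positive definiteness of a complex square matrix: Hermitian and
  Re (x^* A x) > 0 for every nonzero vector x.\<close>
definition pos_def_mat :: "complex mat \<Rightarrow> bool" where
  "pos_def_mat A \<longleftrightarrow> square_mat A \<and> mat_adjoint A = A \<and>
     (\<forall>v \<in> carrier_vec (dim_row A). v \<noteq> 0\<^sub>v (dim_row A) \<longrightarrow>
        Re (conjugate v \<bullet> (A *\<^sub>v v)) > 0)"

text \<open>Inverse of an invertible square matrix.\<close>
definition minv :: "complex mat \<Rightarrow> complex mat" where
  "minv A = (SOME B. B \<in> carrier_mat (dim_row A) (dim_row A) \<and>
                      A * B = 1\<^sub>m (dim_row A) \<and> B * A = 1\<^sub>m (dim_row A))"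

text \<open>Kronecker product A \<otimes> I_l (index (i1,i2) \<mapsto> i1*l + i2).\<close>
definition kron_id :: "complex mat \<Rightarrow> nat \<Rightarrow> complex mat" where
  "kron_id A l = mat (dim_row A * l) (dim_col A * l)
     (\<lambda>(r,c). if r mod l = c mod l then A $$ (r div l, c div l) else 0)"

text \<open>W_j: l n_j x l n_j block lower-triangular block-Toeplitz matrix with
  block Wb j k on the k-th block subdiagonal.\<close>
definition toeplitz_block :: "nat \<Rightarrow> nat \<Rightarrow> (nat \<Rightarrow> complex mat) \<Rightarrow> complex mat" where
  "toeplitz_block l nj Wj = mat (l * nj) (l * nj)
     (\<lambda>(r,c). if c div l \<le> r div l then Wj (r div l - c div l) $$ (r mod l, c mod l) else 0)"

definition W_big :: "nat \<Rightarrow> nat \<Rightarrow> (nat \<Rightarrow> nat) \<Rightarrow> (nat \<Rightarrow> nat \<Rightarrow> complex mat) \<Rightarrow> complex mat" where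
  "W_big l m ns Wb = diag_block_mat (map (\<lambda>j. toeplitz_block l (ns j) (Wb j)) [0..<Suc m])"

text \<open>Z_j: n_j x n_j lower bidiagonal with z_j on the diagonal, 1 on the subdiagonal.\<close>
definition Z_block :: "nat \<Rightarrow> complex \<Rightarrow> complex mat" where
  "Z_block nj zj = mat nj nj (\<lambda>(i,k). if i = k then zj else if i = Suc k then 1 else 0)"

definition Z_big :: "nat \<Rightarrow> (nat \<Rightarrow> nat) \<Rightarrow> (nat \<Rightarrow> complex) \<Rightarrow> complex mat" where
  "Z_big m ns z = diag_block_mat (map (\<lambda>j. Z_block (ns j) (z j)) [0..<Suc m])"

text \<open>Total size n + 1 = sum of the n_j, and the stacked vector e.\<close>
definition total_size :: "nat \<Rightarrow> (nat \<Rightarrow> nat) \<Rightarrow> nat" where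
  "total_size m ns = (\<Sum>j\<le>m. ns j)"

definition e_vec :: "nat \<Rightarrow> (nat \<Rightarrow> nat) \<Rightarrow> complex vec" where
  "e_vec m ns = vec (total_size m ns)
     (\<lambda>r. if \<exists>j\<le>m. r = (\<Sum>i<j. ns i) then 1 else 0)"

text \<open>The rank-one matrix e e'.\<close>
definition outer_e :: "nat \<Rightarrow> (nat \<Rightarrow> nat) \<Rightarrow> complex mat" where
  "outer_e m ns = mat (total_size m ns) (total_size m ns)
     (\<lambda>(i,k). e_vec m ns $ i * e_vec m ns $ k)"

end

theory Submission
  imports Defs
begin

type_synonym cmat = "complex mat"
type_synonym cvec = "complex vec"

lemma adj_dims[simp]: "dim_row (mat_adjoint (A::cmat)) = dim_col A" "dim_col (mat_adjoint (A::cmat)) = dim_row A"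
  unfolding mat_adjoint_def by auto

lemma adj_index[simp]: "i < dim_col A \<Longrightarrow> j < dim_row A \<Longrightarrow> mat_adjoint (A::cmat) $$ (i,j) = cnj (A $$ (j,i))"
  unfolding mat_adjoint_def 
  apply (subst mat_of_rows_index)
  apply simp apply simp
  apply simp
  done

lemma adj_carrier[simp]: "(A::cmat) \<in> carrier_mat n m \<Longrightarrow> mat_adjoint A \<in> carrier_mat m n"
  by (intro carrier_matI) auto

lemma adj_adj[simp]: "mat_adjoint (mat_adjoint (A::cmat)) = A"
  by (rule eq_matI) auto

lemma adj_mult: assumes "(A::cmat) \<in> carrier_mat n k" "B \<in> carrier_mat k m"
  shows "mat_adjoint (A * B) = mat_adjoint B * mat_adjoint A"
  using assms by (intro eq_matI) (auto simp: scalar_prod_def cnj_sum mult.commute intro!: sum.cong)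

lemma adj_add: assumes "(A::cmat) \<in> carrier_mat n m" "B \<in> carrier_mat n m"
  shows "mat_adjoint (A + B) = mat_adjoint A + mat_adjoint B"
  using assms by (intro eq_matI) auto

lemma adj_minus: assumes "(A::cmat) \<in> carrier_mat n m" "B \<in> carrier_mat n m"
  shows "mat_adjoint (A - B) = mat_adjoint A - mat_adjoint B"
  using assms by (intro eq_matI) auto

lemma adj_smult: "mat_adjoint (c \<cdot>\<^sub>m (A::cmat)) = cnj c \<cdot>\<^sub>m mat_adjoint A"
  by (intro eq_matI) auto

lemma adj_one[simp]: "mat_adjoint (1\<^sub>m n :: complex mat) = 1\<^sub>m n"
  by (intro eq_matI) auto

lemma mult_carrier_sq[simp]: "(A::cmat) \<in> carrier_mat n n \<Longrightarrow> B \<in> carrier_mat n n \<Longrightarrow> A * B \<in> carrier_mat n n"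
  by (rule mult_carrier_mat)

lemma mult_carrier_sqv[simp]: "(A::cmat) \<in> carrier_mat n n \<Longrightarrow> v \<in> carrier_vec n \<Longrightarrow> A *\<^sub>v v \<in> carrier_vec n"
  by (rule mult_mat_vec_carrier)

lemma mult_zero_vec_sq[simp]: "(A::cmat) \<in> carrier_mat n m \<Longrightarrow> A *\<^sub>v 0\<^sub>v m = 0\<^sub>v n"
  by (intro eq_vecI) (auto simp: scalar_prod_def)

lemma form_sum: assumes "(A::cmat) \<in> carrier_mat n m" "x \<in> carrier_vec n" "y \<in> carrier_vec m"
  shows "conjugate x \<bullet> (A *\<^sub>v y) = (\<Sum>i<n. \<Sum>j<m. cnj (x $ i) * A $$ (i,j) * y $ j)"
  using assms by (auto simp: scalar_prod_def sum_distrib_left mult.assoc lessThan_atLeast0 intro!: sum.cong)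

lemma form_adj: assumes "(A::cmat) \<in> carrier_mat n m" "x \<in> carrier_vec n" "y \<in> carrier_vec m"
  shows "conjugate x \<bullet> (A *\<^sub>v y) = conjugate (mat_adjoint A *\<^sub>v x) \<bullet> y"
proof -
  have "conjugate (mat_adjoint A *\<^sub>v x) \<bullet> y = (\<Sum>j<m. cnj (\<Sum>i<n. cnj (A $$ (i,j)) * x $ i) * y $ j)"
    using assms by (auto simp: scalar_prod_def lessThan_atLeast0 intro!: sum.cong)
  also have "\<dots> = (\<Sum>j<m. \<Sum>i<n. cnj (x $ i) * A $$ (i,j) * y $ j)"
    by (auto simp: cnj_sum sum_distrib_right sum_distrib_left mult.commute mult.left_commute intro!: sum.cong)
  also have "\<dots> = (\<Sum>i<n. \<Sum>j<m. cnj (x $ i) * A $$ (i,j) * y $ j)"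
    by (rule sum.swap)
  finally show ?thesis using form_sum[OF assms] by simp
qed


lemma inv_crit: assumes A: "(A::cmat) \<in> carrier_mat n n"
  and ker: "\<And>y. y \<in> carrier_vec n \<Longrightarrow> mat_adjoint A *\<^sub>v y = 0\<^sub>v n \<Longrightarrow> y = 0\<^sub>v n"
  shows "invertible_mat A"
proof -
  have aA: "mat_adjoint A \<in> carrier_mat n n" using A by simp
  have "det (mat_adjoint A) \<noteq> 0"
    using det_0_iff_vec_prod_zero[OF aA] ker by blast
  from det_non_zero_imp_unit[OF aA this, of "()"]
  obtain B where B: "B \<in> carrier_mat n n" "B * mat_adjoint A = 1\<^sub>m n" "mat_adjoint A * B = 1\<^sub>m n"
    unfolding Units_def ring_mat_def by auto
  have 1: "A * mat_adjoint B = 1\<^sub>m n"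
    using adj_mult[OF B(1) aA] B(2) by simp
  have 2: "mat_adjoint B * A = 1\<^sub>m n"
    using adj_mult[OF aA B(1)] B(3) by simp
  show ?thesis unfolding invertible_mat_def inverts_mat_def
    using A 1 2 B(1) by (intro conjI exI[of _ "mat_adjoint B"]) auto
qed

lemma minv_props: assumes A: "(A::cmat) \<in> carrier_mat n n" and inv: "invertible_mat A"
  shows "minv A \<in> carrier_mat n n" "A * minv A = 1\<^sub>m n" "minv A * A = 1\<^sub>m n"
proof -
  from inv obtain B where B: "A * B = 1\<^sub>m (dim_row A)" "B * A = 1\<^sub>m (dim_row B)"
    unfolding invertible_mat_def inverts_mat_def by auto
  have "dim_col (B * A) = n" using A by simp
  hence rB: "dim_row B = n" using B(2) by simp
  have "dim_col (A * B) = n" using A B(1) by simp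
  hence cB: "dim_col B = n" by simp
  have Bc: "B \<in> carrier_mat n n" using rB cB by (intro carrier_matI) auto
  have ex: "\<exists>B. B \<in> carrier_mat (dim_row A) (dim_row A) \<and> A * B = 1\<^sub>m (dim_row A) \<and> B * A = 1\<^sub>m (dim_row A)"
    using Bc B A rB by auto
  from someI_ex[OF ex] show "minv A \<in> carrier_mat n n" "A * minv A = 1\<^sub>m n" "minv A * A = 1\<^sub>m n"
    unfolding minv_def using A by auto
qed

lemma inv_adj_ker: assumes A: "(A::cmat) \<in> carrier_mat n n" and B: "B \<in> carrier_mat n n"
  and AB: "A * B = 1\<^sub>m n" and y: "y \<in> carrier_vec n" and z: "mat_adjoint A *\<^sub>v y = 0\<^sub>v n"
  shows "y = 0\<^sub>v n"
proof -
  have "mat_adjoint B * mat_adjoint A = 1\<^sub>m n" using adj_mult[OF A B] AB by simp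
  hence "y = (mat_adjoint B * mat_adjoint A) *\<^sub>v y" using y by simp
  also have "\<dots> = mat_adjoint B *\<^sub>v (mat_adjoint A *\<^sub>v y)"
    using assoc_mult_mat_vec[of "mat_adjoint B" n n "mat_adjoint A" n y] A B y by simp
  also have "\<dots> = 0\<^sub>v n" unfolding z using B by simp
  finally show ?thesis .
qed

definition herm :: "cmat \<Rightarrow> bool" where "herm A \<longleftrightarrow> mat_adjoint A = A"

lemma pos_defI: assumes "(P::cmat) \<in> carrier_mat n n" "herm P"
  "\<And>x. x \<in> carrier_vec n \<Longrightarrow> x \<noteq> 0\<^sub>v n \<Longrightarrow> Re (conjugate x \<bullet> (P *\<^sub>v x)) > 0"
  shows "pos_def_mat P"
  using assms unfolding pos_def_mat_def herm_def by auto

lemma pos_defD: assumes "pos_def_mat (P::cmat)" "P \<in> carrier_mat n n"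
  shows "herm P" "\<And>x. x \<in> carrier_vec n \<Longrightarrow> x \<noteq> 0\<^sub>v n \<Longrightarrow> Re (conjugate x \<bullet> (P *\<^sub>v x)) > 0"
  using assms unfolding pos_def_mat_def herm_def by auto

lemma form_cong: assumes C: "(C::cmat) \<in> carrier_mat n n" and P: "P \<in> carrier_mat n n"
  and x: "x \<in> carrier_vec n"
  shows "conjugate x \<bullet> ((C * P * mat_adjoint C) *\<^sub>v x) = conjugate (mat_adjoint C *\<^sub>v x) \<bullet> (P *\<^sub>v (mat_adjoint C *\<^sub>v x))"
proof -
  have "(C * P * mat_adjoint C) *\<^sub>v x = C *\<^sub>v (P *\<^sub>v (mat_adjoint C *\<^sub>v x))"
    using assoc_mult_mat_vec[of "C * P" n n "mat_adjoint C" n x] assoc_mult_mat_vec[of C n n P n "mat_adjoint C *\<^sub>v x"] C P x by simp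
  thus ?thesis using form_adj[OF C x] C P x by simp
qed

lemma herm_cong: assumes C: "(C::cmat) \<in> carrier_mat n n" and P: "P \<in> carrier_mat n n" and h: "herm P"
  shows "herm (C * P * mat_adjoint C)"
proof -
  have "mat_adjoint (C * P * mat_adjoint C) = mat_adjoint (mat_adjoint C) * mat_adjoint (C * P)"
    using C P by (intro adj_mult) auto
  also have "\<dots> = C * (mat_adjoint P * mat_adjoint C)" using adj_mult[OF C P] by simp
  also have "\<dots> = C * P * mat_adjoint C" using h C P assoc_mult_mat[of C n n P n "mat_adjoint C" n] unfolding herm_def by simp
  finally show ?thesis unfolding herm_def .
qed

lemma pd_cong: assumes P: "pos_def_mat P" "(P::cmat) \<in> carrier_mat n n"
  and C: "C \<in> carrier_mat n n" and D: "D \<in> carrier_mat n n" and CD: "C * D = 1\<^sub>m n"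
  shows "pos_def_mat (C * P * mat_adjoint C)"
proof (rule pos_defI)
  show "C * P * mat_adjoint C \<in> carrier_mat n n" using C P by simp
  show "herm (C * P * mat_adjoint C)" using herm_cong[OF C P(2) pos_defD(1)[OF P]] .
  fix x :: cvec assume x: "x \<in> carrier_vec n" "x \<noteq> 0\<^sub>v n"
  have "mat_adjoint C *\<^sub>v x \<noteq> 0\<^sub>v n" using inv_adj_ker[OF C D CD x(1)] x(2) by blast
  moreover have "mat_adjoint C *\<^sub>v x \<in> carrier_vec n" using C x by simp
  ultimately show "Re (conjugate x \<bullet> ((C * P * mat_adjoint C) *\<^sub>v x)) > 0"
    unfolding form_cong[OF C P(2) x(1)] using pos_defD(2)[OF P] by blast
qed


lemma cong_id: assumes X: "(X::cmat) \<in> carrier_mat n n" and Y: "Y \<in> carrier_mat n n"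
  and K: "K \<in> carrier_mat n n" and YX: "Y * X = 1\<^sub>m n"
  shows "Y * (X * K + K * mat_adjoint X - K) * mat_adjoint Y = K * mat_adjoint Y + Y * K - Y * K * mat_adjoint Y"
proof -
  note R = assoc_mult_mat[where n\<^sub>1=n and n\<^sub>2=n and n\<^sub>3=n and n\<^sub>4=n]
    add_mult_distrib_mat[where nr=n and n=n and nc=n]
    mult_add_distrib_mat[where nr=n and n=n and nc=n]
    minus_mult_distrib_mat[where nr=n and n=n and nc=n]
    mult_minus_distrib_mat[where nr=n and n=n and nc=n]
    minus_carrier_mat[where nr=n and nc=n]
    right_mult_one_mat[where nr=n and nc=n] left_mult_one_mat[where nr=n and nc=n]
  have aXY: "mat_adjoint X * mat_adjoint Y = 1\<^sub>m n" using adj_mult[OF Y X] YX by simp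
  have e0: "Y * (X * K) = K" using X Y K YX by (simp add: R flip: R(1))
  have e1: "Y * (X * K + K * mat_adjoint X - K) = K + Y * K * mat_adjoint X - Y * K"
    using X Y K e0 by (simp add: R)
  have e2: "Y * K * mat_adjoint X * mat_adjoint Y = Y * K"
    using X Y K aXY by (simp add: R)
  show ?thesis unfolding e1 using X Y K e2 by (simp add: R)
qed


lemma shift_id: assumes X: "(X::cmat) \<in> carrier_mat n n" and K: "K \<in> carrier_mat n n"
  shows "(X + (1/2) \<cdot>\<^sub>m 1\<^sub>m n) * K + K * mat_adjoint (X + (1/2) \<cdot>\<^sub>m 1\<^sub>m n) - K = X * K + K * mat_adjoint X"
    "(X - (1/2) \<cdot>\<^sub>m 1\<^sub>m n) * K + K * mat_adjoint (X - (1/2) \<cdot>\<^sub>m 1\<^sub>m n) = X * K + K * mat_adjoint X - K"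
proof -
  note R = assoc_mult_mat[where n\<^sub>1=n and n\<^sub>2=n and n\<^sub>3=n and n\<^sub>4=n]
    add_mult_distrib_mat[where nr=n and n=n and nc=n]
    mult_add_distrib_mat[where nr=n and n=n and nc=n]
    minus_mult_distrib_mat[where nr=n and n=n and nc=n]
    mult_minus_distrib_mat[where nr=n and n=n and nc=n]
    minus_carrier_mat[where nr=n and nc=n]
    right_mult_one_mat[where nr=n and nc=n] left_mult_one_mat[where nr=n and nc=n]
    mult_smult_distrib[where nr=n and n=n and nc=n] mult_smult_assoc_mat[where nr=n and n=n and nc=n]
  have a1: "mat_adjoint (X + (1/2) \<cdot>\<^sub>m 1\<^sub>m n) = mat_adjoint X + (1/2) \<cdot>\<^sub>m 1\<^sub>m n"
    using X by (simp add: adj_add adj_smult)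
  have a2: "mat_adjoint (X - (1/2) \<cdot>\<^sub>m 1\<^sub>m n) = mat_adjoint X - (1/2) \<cdot>\<^sub>m 1\<^sub>m n"
    using X by (simp add: adj_minus adj_smult)
  show "(X + (1/2) \<cdot>\<^sub>m 1\<^sub>m n) * K + K * mat_adjoint (X + (1/2) \<cdot>\<^sub>m 1\<^sub>m n) - K = X * K + K * mat_adjoint X"
    unfolding a1 using X K by (simp add: R) (rule eq_matI, auto)
  show "(X - (1/2) \<cdot>\<^sub>m 1\<^sub>m n) * K + K * mat_adjoint (X - (1/2) \<cdot>\<^sub>m 1\<^sub>m n) = X * K + K * mat_adjoint X - K"
    unfolding a2 using X K by (simp add: R) (rule eq_matI, auto)
qed

lemma T_id: assumes T: "(T::cmat) \<in> carrier_mat n n" and K: "K \<in> carrier_mat n n"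
  shows "K * mat_adjoint (1\<^sub>m n - s \<cdot>\<^sub>m T) + (1\<^sub>m n - s \<cdot>\<^sub>m T) * K - (1\<^sub>m n - s \<cdot>\<^sub>m T) * K * mat_adjoint (1\<^sub>m n - s \<cdot>\<^sub>m T)
     = K - (s * cnj s) \<cdot>\<^sub>m (T * K * mat_adjoint T)"
proof -
  note R = assoc_mult_mat[where n\<^sub>1=n and n\<^sub>2=n and n\<^sub>3=n and n\<^sub>4=n]
    add_mult_distrib_mat[where nr=n and n=n and nc=n]
    mult_add_distrib_mat[where nr=n and n=n and nc=n]
    minus_mult_distrib_mat[where nr=n and n=n and nc=n]
    mult_minus_distrib_mat[where nr=n and n=n and nc=n]
    minus_carrier_mat[where nr=n and nc=n]
    right_mult_one_mat[where nr=n and nc=n] left_mult_one_mat[where nr=n and nc=n]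
    mult_smult_distrib[where nr=n and n=n and nc=n] mult_smult_assoc_mat[where nr=n and n=n and nc=n]
  have a1: "mat_adjoint (1\<^sub>m n - s \<cdot>\<^sub>m T) = 1\<^sub>m n - cnj s \<cdot>\<^sub>m mat_adjoint T"
    using T by (intro eq_matI) auto
  show ?thesis
    unfolding a1 using T K by (simp add: R) (rule eq_matI, auto simp: algebra_simps)
qed


lemma form_add: assumes "(A::cmat) \<in> carrier_mat n n" "B \<in> carrier_mat n n" "x \<in> carrier_vec n"
  shows "conjugate x \<bullet> ((A + B) *\<^sub>v x) = conjugate x \<bullet> (A *\<^sub>v x) + conjugate x \<bullet> (B *\<^sub>v x)"
  using assms by (simp add: add_mult_distrib_mat_vec[where nr=n and nc=n] scalar_prod_add_distrib[where n=n])

lemma form_minus: assumes "(A::cmat) \<in> carrier_mat n n" "B \<in> carrier_mat n n" "x \<in> carrier_vec n"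
  shows "conjugate x \<bullet> ((A - B) *\<^sub>v x) = conjugate x \<bullet> (A *\<^sub>v x) - conjugate x \<bullet> (B *\<^sub>v x)"
  using assms by (simp add: minus_mult_distrib_mat_vec[where nr=n and nc=n] scalar_prod_minus_distrib[where n=n])

lemma form_smult: assumes "(A::cmat) \<in> carrier_mat n n" "x \<in> carrier_vec n"
  shows "conjugate x \<bullet> ((c \<cdot>\<^sub>m A) *\<^sub>v x) = c * (conjugate x \<bullet> (A *\<^sub>v x))"
  using assms by (simp add: form_sum[where n=n and m=n] sum_distrib_left mult_ac)

lemma form_mult: assumes A: "(A::cmat) \<in> carrier_mat n n" and B: "B \<in> carrier_mat n n" and x: "x \<in> carrier_vec n"
  shows "conjugate x \<bullet> ((A * B) *\<^sub>v x) = conjugate (mat_adjoint A *\<^sub>v x) \<bullet> (B *\<^sub>v x)"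
proof -
  have "(A * B) *\<^sub>v x = A *\<^sub>v (B *\<^sub>v x)" using assoc_mult_mat_vec[of A n n B n x] A B x by simp
  thus ?thesis using form_adj[OF A x, of "B *\<^sub>v x"] B x by simp
qed

lemma form_zero[simp]: "x \<in> carrier_vec n \<Longrightarrow> conjugate (0\<^sub>v n) \<bullet> (x::cvec) = 0"
   "x \<in> carrier_vec n \<Longrightarrow> conjugate (x::cvec) \<bullet> 0\<^sub>v n = 0"
  by (auto simp: scalar_prod_def)


lemma main_alg:
  fixes W K :: cmat and N :: nat
  assumes W: "W \<in> carrier_mat N N" and K: "K \<in> carrier_mat N N" and hK: "herm K"
    and psdK: "\<And>x. x \<in> carrier_vec N \<Longrightarrow> Re (conjugate x \<bullet> (K *\<^sub>v x)) \<ge> 0"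
    and pick: "pos_def_mat (W * K + K * mat_adjoint W)"
  shows "invertible_mat (W + (1/2) \<cdot>\<^sub>m 1\<^sub>m N) \<and>
            (\<forall>t::real. 0 \<le> t \<and> t \<le> 1 \<longrightarrow>
                invertible_mat (1\<^sub>m N - complex_of_real t \<cdot>\<^sub>m ((W - (1/2) \<cdot>\<^sub>m 1\<^sub>m N) * minv (W + (1/2) \<cdot>\<^sub>m 1\<^sub>m N))) \<and>
                   pos_def_mat ((minv (1\<^sub>m N - complex_of_real t \<cdot>\<^sub>m ((W - (1/2) \<cdot>\<^sub>m 1\<^sub>m N) * minv (W + (1/2) \<cdot>\<^sub>m 1\<^sub>m N))) - (1/2) \<cdot>\<^sub>m 1\<^sub>m N) * K
                     + K * mat_adjoint (minv (1\<^sub>m N - complex_of_real t \<cdot>\<^sub>m ((W - (1/2) \<cdot>\<^sub>m 1\<^sub>m N) * minv (W + (1/2) \<cdot>\<^sub>m 1\<^sub>m N))) - (1/2) \<cdot>\<^sub>m 1\<^sub>m N)))"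
proof -
  note R = assoc_mult_mat[where n\<^sub>1=N and n\<^sub>2=N and n\<^sub>3=N and n\<^sub>4=N]
    add_mult_distrib_mat[where nr=N and n=N and nc=N]
    mult_add_distrib_mat[where nr=N and n=N and nc=N]
    minus_mult_distrib_mat[where nr=N and n=N and nc=N]
    mult_minus_distrib_mat[where nr=N and n=N and nc=N]
    minus_carrier_mat[where nr=N and nc=N]
    right_mult_one_mat[where nr=N and nc=N] left_mult_one_mat[where nr=N and nc=N]
    mult_smult_distrib[where nr=N and n=N and nc=N] mult_smult_assoc_mat[where nr=N and n=N and nc=N]
  define Ih where "Ih = (1/2::complex) \<cdot>\<^sub>m 1\<^sub>m N"
  define A where "A = W + Ih"
  define P0 where "P0 = W * K + K * mat_adjoint W"
  have Ih: "Ih \<in> carrier_mat N N" unfolding Ih_def by simp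
  have A: "A \<in> carrier_mat N N" unfolding A_def using W Ih by simp
  have P0: "P0 \<in> carrier_mat N N" unfolding P0_def using W K by simp
  have P0A: "P0 = A * K + K * mat_adjoint A - K"
    unfolding P0_def A_def Ih_def using shift_id(1)[OF W K] by simp
  have pdP0: "pos_def_mat P0" using pick unfolding P0_def .
  have invA: "invertible_mat A"
  proof (rule inv_crit[OF A])
    fix y assume y: "y \<in> carrier_vec N" and z: "mat_adjoint A *\<^sub>v y = 0\<^sub>v N"
    show "y = 0\<^sub>v N"
    proof (rule ccontr)
      assume ne: "y \<noteq> 0\<^sub>v N"
      have "conjugate y \<bullet> (P0 *\<^sub>v y) = conjugate y \<bullet> ((A * K) *\<^sub>v y) + conjugate y \<bullet> ((K * mat_adjoint A) *\<^sub>v y) - conjugate y \<bullet> (K *\<^sub>v y)"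
        unfolding P0A using A K y by (simp add: form_add[where n=N] form_minus[where n=N])
      also have "\<dots> = - (conjugate y \<bullet> (K *\<^sub>v y))"
        using form_mult[OF A K y] form_mult[OF K adj_carrier[OF A] y] z y K by simp
      finally have "Re (conjugate y \<bullet> (P0 *\<^sub>v y)) \<le> 0" using psdK[OF y] by simp
      thus False using pos_defD(2)[OF pdP0 P0 y ne] by simp
    qed
  qed
  define B where "B = minv A"
  have B: "B \<in> carrier_mat N N" "A * B = 1\<^sub>m N" "B * A = 1\<^sub>m N"
    using minv_props[OF A invA] unfolding B_def by auto
  define T where "T = (W - Ih) * B"
  have T: "T \<in> carrier_mat N N" unfolding T_def using W Ih B by (simp add: minus_carrier_mat)
  have WIh: "W - Ih = A - 1\<^sub>m N" unfolding A_def Ih_def using W by (intro eq_matI) auto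
  have TB: "T = 1\<^sub>m N - B" unfolding T_def WIh using A B by (simp add: R)
  have BT: "B = 1\<^sub>m N - 1 \<cdot>\<^sub>m T" unfolding TB using B by (intro eq_matI) auto
  define X where "X = T * K * mat_adjoint T"
  have X: "X \<in> carrier_mat N N" unfolding X_def using T K by simp
  define P where "P = B * P0 * mat_adjoint B"
  have P: "P \<in> carrier_mat N N" unfolding P_def using B P0 by simp
  have pdP: "pos_def_mat P" unfolding P_def by (rule pd_cong[OF pdP0 P0 B(1) A B(3)])
  have one1: "1 \<cdot>\<^sub>m (T * K * mat_adjoint T) = T * K * mat_adjoint T" by (intro eq_matI) auto
  have PX: "P = K - X"
    unfolding P_def P0A cong_id[OF A B(1) K B(3)] X_def using T_id[OF T K, of 1] BT one1 by simp
  have hX: "herm X" unfolding X_def by (rule herm_cong[OF T K hK])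
  have Xpos: "Re (conjugate x \<bullet> (X *\<^sub>v x)) \<ge> 0" if x: "x \<in> carrier_vec N" for x
    unfolding X_def form_cong[OF T K x] using psdK[of "mat_adjoint T *\<^sub>v x"] T x by simp
  have main: "invertible_mat (1\<^sub>m N - complex_of_real t \<cdot>\<^sub>m T) \<and>
                   pos_def_mat ((minv (1\<^sub>m N - complex_of_real t \<cdot>\<^sub>m T) - Ih) * K
                     + K * mat_adjoint (minv (1\<^sub>m N - complex_of_real t \<cdot>\<^sub>m T) - Ih))"
    if t: "0 \<le> t" "t \<le> 1" for t :: real
  proof -
    define M where "M = 1\<^sub>m N - complex_of_real t \<cdot>\<^sub>m T"
    have M: "M \<in> carrier_mat N N" unfolding M_def using T by (simp add: minus_carrier_mat)
    define Q where "Q = K * mat_adjoint M + M * K - M * K * mat_adjoint M"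
    have Q: "Q \<in> carrier_mat N N" unfolding Q_def using K M by (simp add: minus_carrier_mat)
    have QX: "Q = K - (complex_of_real (t * t)) \<cdot>\<^sub>m X"
      unfolding Q_def M_def X_def using T_id[OF T K, of "complex_of_real t"] by simp
    have hQ: "herm Q"
    proof -
      have "mat_adjoint Q = mat_adjoint K - mat_adjoint ((complex_of_real (t * t)) \<cdot>\<^sub>m X)"
        unfolding QX using K X by (intro adj_minus) auto
      also have "\<dots> = Q" unfolding QX adj_smult using hK hX unfolding herm_def by simp
      finally show ?thesis unfolding herm_def .
    qed
    have Qpos: "Re (conjugate x \<bullet> (Q *\<^sub>v x)) > 0" if x: "x \<in> carrier_vec N" "x \<noteq> 0\<^sub>v N" for x
    proof -
      have eQ: "Re (conjugate x \<bullet> (Q *\<^sub>v x)) = Re (conjugate x \<bullet> (K *\<^sub>v x)) - t * t * Re (conjugate x \<bullet> (X *\<^sub>v x))"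
        unfolding QX using K X x by (simp add: form_minus[where n=N] form_smult[where n=N])
      have eP: "Re (conjugate x \<bullet> (P *\<^sub>v x)) = Re (conjugate x \<bullet> (K *\<^sub>v x)) - Re (conjugate x \<bullet> (X *\<^sub>v x))"
        unfolding PX using K X x by (simp add: form_minus[where n=N])
      have "t * t \<le> 1" using t by (simp add: mult_le_one)
      hence "t * t * Re (conjugate x \<bullet> (X *\<^sub>v x)) \<le> Re (conjugate x \<bullet> (X *\<^sub>v x))"
        using Xpos[OF x(1)] by (simp add: mult_left_le_one_le)
      thus ?thesis using eQ eP pos_defD(2)[OF pdP P x] by simp
    qed
    have pdQ: "pos_def_mat Q" by (rule pos_defI[OF Q hQ Qpos])
    have invM: "invertible_mat M"
    proof (rule inv_crit[OF M])
      fix y assume y: "y \<in> carrier_vec N" and z: "mat_adjoint M *\<^sub>v y = 0\<^sub>v N"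
      show "y = 0\<^sub>v N"
      proof (rule ccontr)
        assume ne: "y \<noteq> 0\<^sub>v N"
        have "conjugate y \<bullet> (Q *\<^sub>v y) = conjugate y \<bullet> ((K * mat_adjoint M) *\<^sub>v y) + conjugate y \<bullet> ((M * K) *\<^sub>v y) - conjugate y \<bullet> ((M * K * mat_adjoint M) *\<^sub>v y)"
          unfolding Q_def using M K y by (simp add: form_add[where n=N] form_minus[where n=N])
        also have "\<dots> = 0"
          using form_mult[OF K adj_carrier[OF M] y] form_mult[OF M K y] form_mult[OF mult_carrier_sq[OF M K] adj_carrier[OF M] y] z y K M by simp
        finally show False using pos_defD(2)[OF pdQ Q y ne] by simp
      qed
    qed
    define C where "C = minv M"
    have C: "C \<in> carrier_mat N N" "M * C = 1\<^sub>m N" "C * M = 1\<^sub>m N"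
      using minv_props[OF M invM] unfolding C_def by auto
    define G where "G = (C - Ih) * K + K * mat_adjoint (C - Ih)"
    have G: "G \<in> carrier_mat N N" unfolding G_def using C Ih K by (simp add: minus_carrier_mat)
    have GC: "G = C * K + K * mat_adjoint C - K" unfolding G_def Ih_def using shift_id(2)[OF C(1) K] by simp
    have QG: "Q = M * G * mat_adjoint M" unfolding GC Q_def using cong_id[OF C(1) M K C(2)] by simp
    have aCM: "mat_adjoint M * mat_adjoint C = 1\<^sub>m N" using adj_mult[OF C(1) M] C(3) by simp
    have "C * Q * mat_adjoint C = (C * M) * G * (mat_adjoint M * mat_adjoint C)"
      unfolding QG adj_mult[OF mult_carrier_sq[OF C(1) M] G] adj_mult[OF C(1) M]
      using C(1) M G by (simp add: R)
    also have "\<dots> = G" unfolding aCM C(3) using G by (simp add: R)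
    finally have CQG: "C * Q * mat_adjoint C = G" .
    have "pos_def_mat G" unfolding CQG[symmetric] by (rule pd_cong[OF pdQ Q C(1) M C(3)])
    thus ?thesis using invM unfolding G_def C_def M_def by simp
  qed
  show ?thesis using invA main unfolding A_def T_def B_def Ih_def by simp
qed


lemma rec_tendsto_zero:
  fixes a e :: "nat \<Rightarrow> complex" and c :: complex
  assumes rec: "\<And>k. a (Suc k) = c * a k + e k" and c: "cmod c < 1" and e: "e \<longlonglongrightarrow> 0"
  shows "a \<longlonglongrightarrow> 0"
proof (rule LIMSEQ_I)
  fix eps :: real assume eps: "0 < eps"
  define r where "r = cmod c"
  define d where "d = eps / 2"
  have r: "0 \<le> r" "r < 1" using c unfolding r_def by auto
  have d: "0 < d" using eps unfolding d_def by auto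
  have "0 < d * (1 - r)" using d r by simp
  from LIMSEQ_D[OF e this] obtain K where K: "\<And>k. k \<ge> K \<Longrightarrow> cmod (e k) < d * (1 - r)" by auto
  define m where "m k = max (cmod (a k) - d) 0" for k
  have step: "m (Suc k) \<le> r * m k" if k: "k \<ge> K" for k
  proof -
    have "cmod (a (Suc k)) \<le> r * cmod (a k) + cmod (e k)"
      unfolding rec r_def using norm_triangle_ineq[of "c * a k" "e k"] by (simp add: norm_mult)
    hence "cmod (a (Suc k)) - d \<le> r * (cmod (a k) - d)" using K[OF k] by (simp add: algebra_simps)
    also have "\<dots> \<le> r * m k" unfolding m_def using r by (intro mult_left_mono) auto
    finally show ?thesis unfolding m_def using r by (auto simp: m_def)
  qed
  have geo: "m (K + j) \<le> r ^ j * m K" for j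
  proof (induction j)
    case 0 then show ?case by simp
  next
    case (Suc j)
    have "m (K + Suc j) \<le> r * m (K + j)" using step[of "K + j"] by simp
    also have "\<dots> \<le> r * (r ^ j * m K)" using Suc r by (intro mult_left_mono) auto
    finally show ?case by (simp add: mult.assoc)
  qed
  have "(\<lambda>j. r ^ j * m K) \<longlonglongrightarrow> 0"
    by (intro tendsto_mult_left_zero LIMSEQ_power_zero) (use r in auto)
  from LIMSEQ_D[OF this d] obtain J where J: "\<And>j. j \<ge> J \<Longrightarrow> norm (r ^ j * m K - 0) < d" by auto
  show "\<exists>no. \<forall>n\<ge>no. norm (a n - 0) < eps"
  proof (intro exI allI impI)
    fix n assume n: "K + J \<le> n"
    define j where "j = n - K"
    have j: "n = K + j" "j \<ge> J" using n unfolding j_def by auto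
    have "r ^ j * m K < d" using J[OF j(2)] by simp
    hence "m n < d" using geo[of j] unfolding j(1) by linarith
    hence "cmod (a n) < 2 * d" unfolding m_def by simp
    thus "norm (a n - 0) < eps" unfolding d_def by simp
  qed
qed


lemma upper_comp: assumes U: "(U::cmat) \<in> carrier_mat n n" and up: "\<And>i j. i < n \<Longrightarrow> j < i \<Longrightarrow> U $$ (i,j) = 0"
  and v: "v \<in> carrier_vec n" and i: "i < n"
  shows "(U *\<^sub>v v) $ i = U $$ (i,i) * v $ i + (\<Sum>j\<in>{Suc i..<n}. U $$ (i,j) * v $ j)"
proof -
  have "(U *\<^sub>v v) $ i = (\<Sum>j\<in>{0..<n}. U $$ (i,j) * v $ j)"
    using U v i by (auto simp: scalar_prod_def intro!: sum.cong)
  also have "\<dots> = (\<Sum>j\<in>{0..<Suc i}. U $$ (i,j) * v $ j) + (\<Sum>j\<in>{Suc i..<n}. U $$ (i,j) * v $ j)"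
    using i by (intro sum.atLeastLessThan_concat[symmetric]) auto
  also have "(\<Sum>j\<in>{0..<Suc i}. U $$ (i,j) * v $ j) = U $$ (i,i) * v $ i"
    using up[OF i] by simp
  finally show ?thesis .
qed

lemma upper_pow_tendsto:
  assumes U: "(U::cmat) \<in> carrier_mat n n" and up: "\<And>i j. i < n \<Longrightarrow> j < i \<Longrightarrow> U $$ (i,j) = 0"
    and d: "\<And>i. i < n \<Longrightarrow> cmod (U $$ (i,i)) < 1" and x: "x \<in> carrier_vec n"
  shows "i < n \<Longrightarrow> (\<lambda>k. (((*\<^sub>v) U ^^ k) x) $ i) \<longlonglongrightarrow> 0"
proof (induction "n - i" arbitrary: i rule: less_induct)
  case less
  define y where "y k = ((*\<^sub>v) U ^^ k) x" for k
  have yc: "y k \<in> carrier_vec n" for k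
    unfolding y_def by (induction k) (use U x in auto)
  have ys: "y (Suc k) = U *\<^sub>v y k" for k unfolding y_def by simp
  have e: "(\<lambda>k. \<Sum>j\<in>{Suc i..<n}. U $$ (i,j) * y k $ j) \<longlonglongrightarrow> 0"
  proof (intro tendsto_null_sum)
    fix j assume j: "j \<in> {Suc i..<n}"
    have "(\<lambda>k. y k $ j) \<longlonglongrightarrow> 0" unfolding y_def using j less by (intro less) auto
    thus "(\<lambda>k. U $$ (i,j) * y k $ j) \<longlonglongrightarrow> 0" by (intro tendsto_mult_right_zero)
  qed
  have "(\<lambda>k. y k $ i) \<longlonglongrightarrow> 0"
    by (rule rec_tendsto_zero[OF _ d[OF less.prems] e]) (simp add: ys upper_comp[OF U up yc less.prems])
  thus ?case unfolding y_def .
qed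


lemma cnj_sprod: assumes "v \<in> carrier_vec n" "w \<in> carrier_vec n"
  shows "cnj (conjugate v \<bullet> (w::cvec)) = conjugate w \<bullet> v"
  using assms by (simp add: scalar_prod_def cnj_sum mult.commute)

lemma form_herm: assumes A: "(A::cmat) \<in> carrier_mat n n" and h: "herm A" and x: "x \<in> carrier_vec n" and y: "y \<in> carrier_vec n"
  shows "conjugate x \<bullet> (A *\<^sub>v y) = cnj (conjugate y \<bullet> (A *\<^sub>v x))"
proof -
  have "conjugate y \<bullet> (A *\<^sub>v x) = conjugate (A *\<^sub>v y) \<bullet> x"
    using form_adj[OF A y x] h unfolding herm_def by simp
  thus ?thesis using cnj_sprod[of "A *\<^sub>v y" n x] A x y by simp
qed

lemma form_unit: assumes S: "(S::cmat) \<in> carrier_mat n n" and i: "i < n" and j: "j < n"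
  shows "conjugate (unit_vec n i) \<bullet> (S *\<^sub>v unit_vec n j) = S $$ (i,j)"
proof -
  have "conjugate (unit_vec n i) \<bullet> (S *\<^sub>v unit_vec n j) = (\<Sum>a<n. \<Sum>b<n. (if a = i then 1 else 0) * S $$ (a,b) * (if b = j then 1 else 0))"
    unfolding form_sum[OF S unit_vec_carrier unit_vec_carrier] using i j by (intro sum.cong refl) auto
  also have "\<dots> = (\<Sum>a<n. if a = i then S $$ (a,j) else 0)"
    using j by (intro sum.cong refl) (auto simp: if_distrib cong: if_cong)
  also have "\<dots> = S $$ (i,j)" using i by simp
  finally show ?thesis .
qed

lemma form_tendsto: assumes S: "(S::cmat) \<in> carrier_mat n n"
  and v: "\<And>k. v k \<in> carrier_vec n" and w: "\<And>k. w k \<in> carrier_vec n"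
  and vt: "\<And>i. i < n \<Longrightarrow> (\<lambda>k. v k $ i) \<longlonglongrightarrow> 0" and wt: "\<And>i. i < n \<Longrightarrow> (\<lambda>k. w k $ i) \<longlonglongrightarrow> 0"
  shows "(\<lambda>k. conjugate (v k) \<bullet> (S *\<^sub>v w k)) \<longlonglongrightarrow> 0"
  unfolding form_sum[OF S v w]
proof (intro tendsto_null_sum)
  fix i j assume i: "i \<in> {..<n}" and j: "j \<in> {..<n}"
  have "(\<lambda>k. cnj (v k $ i)) \<longlonglongrightarrow> 0" using tendsto_cnj[OF vt[of i]] i by simp
  hence "(\<lambda>k. cnj (v k $ i) * S $$ (i, j)) \<longlonglongrightarrow> 0" by (rule tendsto_mult_left_zero)
  thus "(\<lambda>k. cnj (v k $ i) * S $$ (i, j) * w k $ j) \<longlonglongrightarrow> 0"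
    using wt[of j] j tendsto_mult_zero by blast
qed


lemma lyap_herm_psd:
  assumes Z: "(Z::cmat) \<in> carrier_mat n n" and low: "\<And>i j. i < n \<Longrightarrow> j < n \<Longrightarrow> i < j \<Longrightarrow> Z $$ (i,j) = 0"
    and d: "\<And>i. i < n \<Longrightarrow> cmod (Z $$ (i,i)) < 1"
    and S: "S \<in> carrier_mat n n" and E: "E \<in> carrier_mat n n" and hE: "herm E"
    and psdE: "\<And>x. x \<in> carrier_vec n \<Longrightarrow> Re (conjugate x \<bullet> (E *\<^sub>v x)) \<ge> 0"
    and lyap: "S = Z * S * mat_adjoint Z + E"
  shows "herm S" "\<And>x. x \<in> carrier_vec n \<Longrightarrow> Re (conjugate x \<bullet> (S *\<^sub>v x)) \<ge> 0"
proof -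
  define U where "U = mat_adjoint Z"
  have U: "U \<in> carrier_mat n n" unfolding U_def using Z by simp
  have upU: "U $$ (i,j) = 0" if "i < n" "j < i" for i j
    unfolding U_def using Z that low[of j i] by auto
  have dU: "cmod (U $$ (i,i)) < 1" if "i < n" for i
    unfolding U_def using Z that d[of i] by auto
  define pw where "pw k x = ((*\<^sub>v) U ^^ k) x" for k x
  have pwc: "pw k x \<in> carrier_vec n" if "x \<in> carrier_vec n" for k x
    unfolding pw_def by (induction k) (use U that in auto)
  have pwS: "pw (Suc k) x = pw k (U *\<^sub>v x)" for k x
    unfolding pw_def by (simp add: funpow_Suc_right del: funpow.simps)
  have pwt: "(\<lambda>k. pw k x $ i) \<longlonglongrightarrow> 0" if "x \<in> carrier_vec n" "i < n" for x i
    unfolding pw_def by (rule upper_pow_tendsto[OF U upU dU that(1) that(2)])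
  define B where "B x y = conjugate x \<bullet> (S *\<^sub>v y)" for x y
  have rec: "B x y = B (U *\<^sub>v x) (U *\<^sub>v y) + conjugate x \<bullet> (E *\<^sub>v y)"
    if x: "x \<in> carrier_vec n" and y: "y \<in> carrier_vec n" for x y
  proof -
    have "S *\<^sub>v y = (Z * S * U) *\<^sub>v y + E *\<^sub>v y"
      using lyap[folded U_def] Z S U E y
      by (metis add_mult_distrib_mat_vec mult_carrier_sq)
    also have "(Z * S * U) *\<^sub>v y = Z *\<^sub>v (S *\<^sub>v (U *\<^sub>v y))"
      using assoc_mult_mat_vec[of "Z * S" n n U n y] assoc_mult_mat_vec[of Z n n S n "U *\<^sub>v y"] Z S U y by simp
    finally have "B x y = conjugate x \<bullet> (Z *\<^sub>v (S *\<^sub>v (U *\<^sub>v y))) + conjugate x \<bullet> (E *\<^sub>v y)"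
      unfolding B_def using x y Z S U E by (simp add: scalar_prod_add_distrib[where n=n])
    thus ?thesis unfolding B_def using form_adj[OF Z x, of "S *\<^sub>v (U *\<^sub>v y)"] U_def S U y by simp
  qed
  have Bt: "(\<lambda>k. B (pw k x) (pw k y)) \<longlonglongrightarrow> 0" if "x \<in> carrier_vec n" "y \<in> carrier_vec n" for x y
    unfolding B_def by (rule form_tendsto[OF S]) (use pwc pwt that in auto)
  show "herm S"
  proof -
    define f where "f x y = B x y - cnj (B y x)" for x y
    have frec: "f x y = f (U *\<^sub>v x) (U *\<^sub>v y)" if "x \<in> carrier_vec n" "y \<in> carrier_vec n" for x y
      unfolding f_def using rec[OF that] rec[OF that(2,1)] form_herm[OF E hE that] by simp
    have fk: "f x y = f (pw k x) (pw k y)" if "x \<in> carrier_vec n" "y \<in> carrier_vec n" for k x y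
      using that
    proof (induction k arbitrary: x y)
      case 0 then show ?case by (simp add: pw_def)
    next
      case (Suc k)
      show ?case unfolding pwS using frec[OF Suc.prems] Suc.IH[of "U *\<^sub>v x" "U *\<^sub>v y"] Suc.prems U by simp
    qed
    have f0: "f x y = 0" if "x \<in> carrier_vec n" "y \<in> carrier_vec n" for x y
    proof -
      have "(\<lambda>k. f (pw k x) (pw k y)) \<longlonglongrightarrow> 0 - cnj 0"
        unfolding f_def by (intro tendsto_diff tendsto_cnj Bt that)
      hence "(\<lambda>k. f x y) \<longlonglongrightarrow> 0" using fk[OF that] by simp
      thus ?thesis by (simp add: LIMSEQ_const_iff)
    qed
    show ?thesis unfolding herm_def
    proof (rule eq_matI)
      fix i j assume i: "i < dim_row S" and j: "j < dim_col S"
      have "f (unit_vec n i) (unit_vec n j) = 0" by (rule f0) auto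
      thus "mat_adjoint S $$ (i, j) = S $$ (i, j)"
        using i j S unfolding f_def B_def by (simp add: form_unit[OF S])
    qed (use S in auto)
  qed
  fix x :: cvec assume x: "x \<in> carrier_vec n"
  have mono: "Re (B (pw k x) (pw k x)) \<le> Re (B x x)" for k
  proof (induction k)
    case 0 then show ?case by (simp add: pw_def)
  next
    case (Suc k)
    have "pw (Suc k) x = U *\<^sub>v pw k x" unfolding pw_def by simp
    hence "Re (B (pw (Suc k) x) (pw (Suc k) x)) \<le> Re (B (pw k x) (pw k x))"
      using rec[OF pwc[OF x] pwc[OF x], of k k] psdE[OF pwc[OF x], of k] by simp
    thus ?case using Suc.IH by simp
  qed
  have "(\<lambda>k. Re (B (pw k x) (pw k x))) \<longlonglongrightarrow> Re 0" by (intro tendsto_Re Bt x)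
  hence "0 \<le> Re (B x x)" using mono by (intro LIMSEQ_le_const2[where a = "Re (B x x)"]) auto
  thus "Re (conjugate x \<bullet> (S *\<^sub>v x)) \<ge> 0" unfolding B_def .
qed


definition lowsmall :: "cmat \<Rightarrow> bool" where
  "lowsmall A \<longleftrightarrow> dim_col A = dim_row A \<and>
     (\<forall>i j. i < dim_row A \<longrightarrow> j < dim_row A \<longrightarrow> i < j \<longrightarrow> A $$ (i,j) = 0) \<and>
     (\<forall>i < dim_row A. cmod (A $$ (i,i)) < 1)"

lemma lowsmall_diag_block: "(\<And>A. A \<in> set As \<Longrightarrow> lowsmall A) \<Longrightarrow> lowsmall (diag_block_mat As)"
proof (induction As)
  case Nil then show ?case unfolding lowsmall_def by simp
next
  case (Cons A As)
  define D where "D = diag_block_mat As"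
  have lD: "lowsmall D" unfolding D_def using Cons by auto
  have lA: "lowsmall A" using Cons by auto
  show ?case unfolding diag_block_mat.simps Let_def D_def[symmetric]
    using lA lD unfolding lowsmall_def by auto
qed

lemma Z_big_props: assumes z: "\<And>j. j \<le> m \<Longrightarrow> cmod (z j) < 1"
  shows "Z_big m ns z \<in> carrier_mat (total_size m ns) (total_size m ns)"
    "\<And>i j. i < total_size m ns \<Longrightarrow> j < total_size m ns \<Longrightarrow> i < j \<Longrightarrow> Z_big m ns z $$ (i,j) = 0"
    "\<And>i. i < total_size m ns \<Longrightarrow> cmod (Z_big m ns z $$ (i,i)) < 1"
proof -
  have dim: "dim_row (Z_big m ns z) = total_size m ns"
    unfolding Z_big_def dim_diag_block_mat total_size_def
    by (simp add: Z_block_def sum_list_distinct_conv_sum_set atLeast0_lessThan_Suc lessThan_Suc_atMost[symmetric] atLeast0LessThan)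
  have "lowsmall (Z_big m ns z)" unfolding Z_big_def
  proof (rule lowsmall_diag_block)
    fix A assume "A \<in> set (map (\<lambda>j. Z_block (ns j) (z j)) [0..<Suc m])"
    then obtain j where j: "j < Suc m" "A = Z_block (ns j) (z j)" by (auto simp del: upt_Suc)
    show "lowsmall A" unfolding j(2) lowsmall_def Z_block_def using z[of j] j(1) by auto
  qed
  thus "Z_big m ns z \<in> carrier_mat (total_size m ns) (total_size m ns)"
    "\<And>i j. i < total_size m ns \<Longrightarrow> j < total_size m ns \<Longrightarrow> i < j \<Longrightarrow> Z_big m ns z $$ (i,j) = 0"
    "\<And>i. i < total_size m ns \<Longrightarrow> cmod (Z_big m ns z $$ (i,i)) < 1"
    unfolding lowsmall_def dim by (auto intro!: carrier_matI simp: dim)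
qed

lemma W_big_carrier: "W_big l m ns Wb \<in> carrier_mat (l * total_size m ns) (l * total_size m ns)"
proof -
  have "dim_row (W_big l m ns Wb) = l * total_size m ns" "dim_col (W_big l m ns Wb) = l * total_size m ns"
    unfolding W_big_def dim_diag_block_mat total_size_def
    by (simp_all add: toeplitz_block_def sum_list_distinct_conv_sum_set atLeast0_lessThan_Suc lessThan_Suc_atMost[symmetric] atLeast0LessThan sum_distrib_left distrib_left)
  thus ?thesis by (intro carrier_matI)
qed

lemma e_real: "i < total_size m ns \<Longrightarrow> cnj (e_vec m ns $ i) = e_vec m ns $ i"
  unfolding e_vec_def by auto

lemma outer_e_props:
  shows "outer_e m ns \<in> carrier_mat (total_size m ns) (total_size m ns)" "herm (outer_e m ns)"
    "\<And>x. x \<in> carrier_vec (total_size m ns) \<Longrightarrow> Re (conjugate x \<bullet> (outer_e m ns *\<^sub>v x)) \<ge> 0"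
proof -
  let ?n = "total_size m ns" and ?e = "e_vec m ns"
  show E: "outer_e m ns \<in> carrier_mat ?n ?n" unfolding outer_e_def by simp
  show "herm (outer_e m ns)" unfolding herm_def outer_e_def
    by (rule eq_matI) (auto simp: e_real mult.commute)
  fix x :: cvec assume x: "x \<in> carrier_vec ?n"
  define s where "s = (\<Sum>k<?n. ?e $ k * x $ k)"
  have "conjugate x \<bullet> (outer_e m ns *\<^sub>v x) = (\<Sum>i<?n. \<Sum>k<?n. cnj (x $ i) * (?e $ i * ?e $ k) * x $ k)"
    unfolding form_sum[OF E x x] unfolding outer_e_def by (intro sum.cong refl) auto
  also have "\<dots> = (\<Sum>i<?n. \<Sum>k<?n. cnj (?e $ i * x $ i) * (?e $ k * x $ k))"
    by (intro sum.cong refl) (auto simp: e_real mult_ac)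
  also have "\<dots> = cnj s * s"
    unfolding s_def cnj_sum sum_product ..
  finally show "Re (conjugate x \<bullet> (outer_e m ns *\<^sub>v x)) \<ge> 0" by simp
qed


lemma sum_blocks: fixes F :: "nat \<Rightarrow> complex" and l n :: nat shows "(\<Sum>r<l*n. F r) = (\<Sum>i<n. \<Sum>q<l. F (i*l + q) :: complex)"
proof -
  have "(\<Sum>r<l*n. F r) = (\<Sum>i<n. sum F {i*l..<i*l+l})"
    using sum.nat_group[where g=F and k=l and n=n] by (simp add: mult.commute)
  also have "\<dots> = (\<Sum>i<n. \<Sum>q<l. F (i*l + q))"
  proof (rule sum.cong[OF refl])
    fix i
    have "sum F {0 + i*l..<l + i*l} = (\<Sum>q\<in>{0..<l}. F (q + i*l))" by (rule sum.shift_bounds_nat_ivl)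
    thus "sum F {i*l..<i*l+l} = (\<Sum>q<l. F (i*l + q))" by (simp add: add.commute atLeast0LessThan)
  qed
  finally show ?thesis .
qed

lemma idx_bound: "i < n \<Longrightarrow> q < (l::nat) \<Longrightarrow> i * l + q < n * l"
proof -
  assume "i < n" "q < l"
  hence "i * l + q < (i + 1) * l" by simp
  also have "\<dots> \<le> n * l" using \<open>i < n\<close> by (intro mult_right_mono) auto
  finally show ?thesis .
qed

lemma kron_carrier: "S \<in> carrier_mat n n \<Longrightarrow> kron_id S l \<in> carrier_mat (l * n) (l * n)"
  unfolding kron_id_def by (auto simp: mult.commute)

lemma kron_index: assumes S: "S \<in> carrier_mat n n" and "i < n" "j < n" "q < l" "p < l"
  shows "kron_id S l $$ (i*l+q, j*l+p) = (if q = p then S $$ (i,j) else 0)"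
  using assms idx_bound[of i n q l] idx_bound[of j n p l] unfolding kron_id_def by auto

lemma kron_herm: assumes S: "S \<in> carrier_mat n n" and h: "herm S"
  shows "herm (kron_id S l)"
  unfolding herm_def
proof (rule eq_matI)
  fix i j assume i: "i < dim_row (kron_id S l)" and j: "j < dim_col (kron_id S l)"
  have i': "i < n * l" "j < n * l" using i j S unfolding kron_id_def by auto
  hence l: "l > 0" by (cases l) auto
  have d: "i div l < n" "j div l < n" using i' by (auto simp: less_mult_imp_div_less)
  have "cnj (S $$ (j div l, i div l)) = S $$ (i div l, j div l)"
    using arg_cong[OF h[unfolded herm_def], of "\<lambda>M. M $$ (i div l, j div l)"] d S by simp
  thus "mat_adjoint (kron_id S l) $$ (i, j) = kron_id S l $$ (i, j)"
    using i' S d unfolding kron_id_def by auto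
qed (use S in \<open>auto simp: kron_id_def\<close>)

lemma kron_psd: assumes S: "(S::cmat) \<in> carrier_mat n n"
  and psd: "\<And>x. x \<in> carrier_vec n \<Longrightarrow> Re (conjugate x \<bullet> (S *\<^sub>v x)) \<ge> 0"
  and x: "x \<in> carrier_vec (l * n)"
  shows "Re (conjugate x \<bullet> (kron_id S l *\<^sub>v x)) \<ge> 0"
proof -
  let ?K = "kron_id S l"
  define xq where "xq q = vec n (\<lambda>i. x $ (i*l + q))" for q
  have xq: "xq q \<in> carrier_vec n" for q unfolding xq_def by simp
  have "conjugate x \<bullet> (?K *\<^sub>v x) = (\<Sum>r<l*n. \<Sum>c<l*n. cnj (x $ r) * ?K $$ (r,c) * x $ c)"
    by (rule form_sum[OF kron_carrier[OF S] x x])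
  also have "\<dots> = (\<Sum>i<n. \<Sum>q<l. \<Sum>j<n. \<Sum>p<l. cnj (x $ (i*l+q)) * ?K $$ (i*l+q, j*l+p) * x $ (j*l+p))"
    by (simp add: sum_blocks)
  also have "\<dots> = (\<Sum>i<n. \<Sum>q<l. \<Sum>j<n. cnj (x $ (i*l+q)) * S $$ (i,j) * x $ (j*l+q))"
  proof (intro sum.cong refl)
    fix i q j assume i: "i \<in> {..<n}" and q: "q \<in> {..<l}" and j: "j \<in> {..<n}"
    have "(\<Sum>p<l. cnj (x $ (i*l+q)) * ?K $$ (i*l+q, j*l+p) * x $ (j*l+p))
        = (\<Sum>p<l. if p = q then cnj (x $ (i*l+q)) * S $$ (i,j) * x $ (j*l+q) else 0)"
      using i q j by (intro sum.cong refl) (auto simp: kron_index[OF S])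
    also have "\<dots> = cnj (x $ (i*l+q)) * S $$ (i,j) * x $ (j*l+q)" using q by simp
    finally show "(\<Sum>p<l. cnj (x $ (i*l+q)) * ?K $$ (i*l+q, j*l+p) * x $ (j*l+p))
        = cnj (x $ (i*l+q)) * S $$ (i,j) * x $ (j*l+q)" .
  qed
  also have "\<dots> = (\<Sum>q<l. \<Sum>i<n. \<Sum>j<n. cnj (x $ (i*l+q)) * S $$ (i,j) * x $ (j*l+q))"
    by (rule sum.swap)
  also have "\<dots> = (\<Sum>q<l. conjugate (xq q) \<bullet> (S *\<^sub>v xq q))"
    by (intro sum.cong refl, subst form_sum[OF S xq xq]) (simp add: xq_def)
  finally have "Re (conjugate x \<bullet> (?K *\<^sub>v x)) = (\<Sum>q<l. Re (conjugate (xq q) \<bullet> (S *\<^sub>v xq q)))"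
    by simp
  also have "\<dots> \<ge> 0" using psd[OF xq] by (intro sum_nonneg) auto
  finally show ?thesis .
qed


theorem lemma4:
  fixes l m :: nat
    and ns :: "nat \<Rightarrow> nat"
    and z :: "nat \<Rightarrow> complex"
    and Wb :: "nat \<Rightarrow> nat \<Rightarrow> complex mat"
    and S :: "complex mat"
  assumes l_pos: "l \<ge> 1"
    and ns_pos: "\<And>j. j \<le> m \<Longrightarrow> ns j \<ge> 1"
    and z0: "z 0 = 0"
    and z_disc: "\<And>j. j \<le> m \<Longrightarrow> cmod (z j) < 1"
    and z_distinct: "inj_on z {0..m}"
    and Wb_dim: "\<And>j k. j \<le> m \<Longrightarrow> k < ns j \<Longrightarrow> Wb j k \<in> carrier_mat l l"
    and S_dim: "S \<in> carrier_mat (total_size m ns) (total_size m ns)"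
    and S_lyap: "S = Z_big m ns z * S * mat_adjoint (Z_big m ns z) + outer_e m ns"
    and pick: "pos_def_mat (W_big l m ns Wb * kron_id S l + kron_id S l * mat_adjoint (W_big l m ns Wb))"
  shows "let W = W_big l m ns Wb; N = l * total_size m ns;
             Ih = (1/2) \<cdot>\<^sub>m 1\<^sub>m N;
             T = (W - Ih) * minv (W + Ih)
         in invertible_mat (W + Ih) \<and>
            (\<forall>t::real. 0 \<le> t \<and> t \<le> 1 \<longrightarrow>
               (let IlT = 1\<^sub>m N - complex_of_real t \<cdot>\<^sub>m T;
                    Wt = minv IlT - Ih
                in invertible_mat IlT \<and>
                   pos_def_mat (Wt * kron_id S l + kron_id S l * mat_adjoint Wt)))"
proof -
  note Zp = Z_big_props[OF z_disc, where ns=ns]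
  note Ep = outer_e_props[where m=m and ns=ns]
  note SL = lyap_herm_psd[OF Zp(1) Zp(2) Zp(3) S_dim Ep(1) Ep(2) Ep(3) S_lyap]
  have Kc: "kron_id S l \<in> carrier_mat (l * total_size m ns) (l * total_size m ns)"
    by (rule kron_carrier[OF S_dim])
  have hK: "herm (kron_id S l)" by (rule kron_herm[OF S_dim SL(1)])
  have psdK: "\<And>x. x \<in> carrier_vec (l * total_size m ns) \<Longrightarrow> Re (conjugate x \<bullet> (kron_id S l *\<^sub>v x)) \<ge> 0"
    by (rule kron_psd[OF S_dim SL(2)])
  show ?thesis unfolding Let_def by (rule main_alg[OF W_big_carrier Kc hK psdK pick])
qed

end
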